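(* For a generic Hankel tensor $\mathcal{H}\in\operatorname{H}^3(\mathbb{C}^n)$, its border rank satisfies $\underline{\operatorname{rank}}(\mathcal{H})\ge\left\lfloor\frac{3n-1}{2}\right\rfloor$.
   Context: A tensor $\mathcal{H}\in\operatorname{T}^3(\mathbb{C}^n)$ is Hankel if $\mathcal{H}_{ijk}=h_{i+j+k-3}$ for some vector $h=(h_0,\dots,h_{3(n-1)})$; $\operatorname{H}^3(\mathbb{C}^n)\cong\mathbb{C}^{3n-2}$ is the space of such tensors and "generic" means outside a proper Zariski-closed subset. The border rank $\underline{\operatorname{rank}}(\mathcal{A})$ of $\mathcal{A}\in\mathbb{C}^n\otimes\mathbb{C}^n\otimes\mathbb{C}^n$ is the least $r$ such that $\mathcal{A}$ is a limit of tensors of the form $\sum_{i=1}^r u_i\otimes v_i\otimes w_i$. *)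

theory Defs
  imports "HOL-Analysis.Analysis"
begin

text \<open>Tensors in C^n (x) C^n (x) C^n are represented as functions nat => nat => nat => complex,
  of which only the entries with indices < n matter (indices are 0-based).\<close>
type_synonym ctensor3 = "nat \<Rightarrow> nat \<Rightarrow> nat \<Rightarrow> complex"

definition rank_le :: "nat \<Rightarrow> nat \<Rightarrow> ctensor3 \<Rightarrow> bool" where
  "rank_le n r T \<longleftrightarrow> (\<exists>u v w :: nat \<Rightarrow> nat \<Rightarrow> complex.
     \<forall>i<n. \<forall>j<n. \<forall>k<n. T i j k = (\<Sum>l<r. u l i * v l j * w l k))"

text \<open>T is a limit of tensors of rank at most r (entrywise convergence, equivalent to
  convergence in the finite-dimensional space).\<close>
definition border_rank_le :: "nat \<Rightarrow> nat \<Rightarrow> ctensor3 \<Rightarrow> bool" where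
  "border_rank_le n r T \<longleftrightarrow> (\<exists>S :: nat \<Rightarrow> ctensor3. (\<forall>m. rank_le n r (S m)) \<and>
     (\<forall>i<n. \<forall>j<n. \<forall>k<n. (\<lambda>m. S m i j k) \<longlonglongrightarrow> T i j k))"

definition border_rank :: "nat \<Rightarrow> ctensor3 \<Rightarrow> nat" where
  "border_rank n T = (LEAST r. border_rank_le n r T)"

text \<open>Hankel tensor with H_{ijk} = h_{i+j+k} (0-based indices; the paper's
  H_{ijk} = h_{i+j+k-3} with 1-based indices).\<close>
definition hankel :: "(nat \<Rightarrow> complex) \<Rightarrow> ctensor3" where
  "hankel h = (\<lambda>i j k. h (i + j + k))"

text \<open>Polynomial functions on C^m (points are nat => complex, only coordinates < m are used).\<close>
inductive_set poly_fun :: "nat \<Rightarrow> ((nat \<Rightarrow> complex) \<Rightarrow> complex) set" for m :: nat where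
  const: "(\<lambda>x. c) \<in> poly_fun m"
| var: "i < m \<Longrightarrow> (\<lambda>x. x i) \<in> poly_fun m"
| add: "p \<in> poly_fun m \<Longrightarrow> q \<in> poly_fun m \<Longrightarrow> (\<lambda>x. p x + q x) \<in> poly_fun m"
| mult: "p \<in> poly_fun m \<Longrightarrow> q \<in> poly_fun m \<Longrightarrow> (\<lambda>x. p x * q x) \<in> poly_fun m"

definition zariski_closed :: "nat \<Rightarrow> (nat \<Rightarrow> complex) set \<Rightarrow> bool" where
  "zariski_closed m Z \<longleftrightarrow> (\<exists>F. F \<subseteq> poly_fun m \<and> Z = {x. \<forall>p\<in>F. p x = 0})"

end

theory Submission imports Defs "Jordan_Normal_Form.DL_Rank" begin

definition sg :: "nat \<Rightarrow> nat \<Rightarrow> complex" where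
  "sg p q = (if p = 0 \<and> q = 1 then 1 else if p = 0 \<and> q = 2 then -1 else
             if p = 1 \<and> q = 0 then -1 else if p = 1 \<and> q = 2 then 1 else
             if p = 2 \<and> q = 0 then 1 else if p = 2 \<and> q = 1 then -1 else 0)"

definition sidx :: "nat \<Rightarrow> nat \<Rightarrow> nat" where
  "sidx d s = (if s = 0 then d else if s = 1 then 0 else 2*d)"

definition iv :: "nat \<Rightarrow> nat \<Rightarrow> nat \<Rightarrow> nat" where
  "iv d p q = sidx d (3 - p - q)"

definition rp :: "nat \<Rightarrow> nat \<Rightarrow> nat \<Rightarrow> nat" where
  "rp n d a = (if a < 2*d then 0 else if a < 2*d+n then 1 else 2)"

definition rj :: "nat \<Rightarrow> nat \<Rightarrow> nat \<Rightarrow> nat" where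
  "rj n d a = (if a < d then a else if a < 2*d then n-2*d+a else if a < 2*d+n then a-2*d else a-2*d-n)"

definition cq :: "nat \<Rightarrow> nat \<Rightarrow> nat \<Rightarrow> nat" where
  "cq n d a = (if a < d then 1 else if a < 2*d then 2 else if a < 2*d+n then
     (if n-2*d \<le> a-2*d \<and> a-2*d < n-d then 0 else 2)
     else (if d \<le> a-2*d-n \<and> a-2*d-n < 2*d then 0 else 1))"

definition ck :: "nat \<Rightarrow> nat \<Rightarrow> nat \<Rightarrow> nat" where
  "ck n d a = (if a < d then n-1-d-a else if a < 2*d then 3*d-1-a else if a < 2*d+n then
     (if n-2*d \<le> a-2*d \<and> a-2*d < n-d then n-1-d-(a-2*d) else n-1-(a-2*d))
     else (if d \<le> a-2*d-n \<and> a-2*d-n < 2*d then n-1+d-(a-2*d-n) else n-1-(a-2*d-n)))"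

definition KT :: "nat \<Rightarrow> ctensor3 \<Rightarrow> nat \<Rightarrow> nat \<Rightarrow> nat \<Rightarrow> nat \<Rightarrow> complex" where
  "KT d T p j q k = sg p q * T (iv d p q) j k"

definition NM :: "nat \<Rightarrow> nat \<Rightarrow> ctensor3 \<Rightarrow> complex mat" where
  "NM n d T = mat (2*n+2*d) (2*n+2*d)
     (\<lambda>(a,b). KT d T (rp n d a) (rj n d a) (cq n d b) (ck n d b))"

lemma bounds:
  assumes "2*d+1 \<le> n" "a < 2*n+2*d"
  shows "rp n d a < 3" "rj n d a < n" "cq n d a < 3" "ck n d a < n"
  using assms unfolding rp_def rj_def cq_def ck_def by auto

lemma iv_bound: "2*d+1 \<le> n \<Longrightarrow> iv d p q < n"
  unfolding iv_def sidx_def by auto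

lemma witness_entry:
  assumes "2*d+1 \<le> n" "a < b" "b < 2*n+2*d"
  shows "sg (rp n d a) (cq n d b) = 0 \<or> iv d (rp n d a) (cq n d b) + rj n d a + ck n d b \<noteq> n-1+d"
  using assms unfolding sg_def iv_def sidx_def rp_def rj_def cq_def ck_def
  by (auto split: if_splits)

lemma witness_diag:
  assumes "2*d+1 \<le> n" "a < 2*n+2*d"
  shows "sg (rp n d a) (cq n d a) \<noteq> 0 \<and> iv d (rp n d a) (cq n d a) + rj n d a + ck n d a = n-1+d"
  using assms unfolding sg_def iv_def sidx_def rp_def rj_def cq_def ck_def
  by (auto split: if_splits)



lemma witness_det:
  assumes "2*d+1 \<le> n"
  shows "Determinant.det (NM n d (hankel (\<lambda>t. if t = n-1+d then 1 else 0))) \<noteq> 0"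
proof -
  let ?A = "NM n d (hankel (\<lambda>t. if t = n-1+d then 1 else 0))"
  have car: "?A \<in> carrier_mat (2*n+2*d) (2*n+2*d)" unfolding NM_def by auto
  have "Determinant.det ?A = prod_list (diag_mat ?A)"
  proof (rule det_lower_triangular[OF _ car])
    fix i j assume "i < j" "j < 2*n+2*d"
    then show "?A $$ (i,j) = 0"
      using witness_entry[OF assms \<open>i<j\<close> \<open>j < _\<close>]
      unfolding NM_def KT_def hankel_def by auto
  qed
  moreover have "0 \<notin> set (diag_mat ?A)"
    using witness_diag[OF assms] unfolding diag_mat_def NM_def KT_def hankel_def
    by auto
  ultimately show ?thesis by (simp add: prod_list_zero_iff)
qed

lemma rank2:
  fixes A :: "complex mat" and U V :: "nat \<Rightarrow> nat \<Rightarrow> complex" and lam :: "nat \<Rightarrow> complex"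
  assumes car: "A \<in> carrier_mat N N"
  and ent: "\<And>a b. a < N \<Longrightarrow> b < N \<Longrightarrow> A $$ (a,b) = U a 0 * V 0 b + U a 1 * V 1 b + U a 2 * V 2 b"
  and lin: "\<And>a. a < N \<Longrightarrow> lam 0 * U a 0 + lam 1 * U a 1 + lam 2 * U a 2 = 0"
  and nz: "lam 0 \<noteq> 0"
  shows "vec_space.rank N A \<le> 2"
proof -
  define B where "B = mat N N (\<lambda>(a,b). U a 1 * (V 1 b - lam 1 / lam 0 * V 0 b))"
  define C where "C = mat N N (\<lambda>(a,b). U a 2 * (V 2 b - lam 2 / lam 0 * V 0 b))"
  have cB: "B \<in> carrier_mat N N" and cC: "C \<in> carrier_mat N N" unfolding B_def C_def by auto
  have AB: "A = B + C"
  proof (rule eq_matI)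
    fix a b assume ab: "a < dim_row (B + C)" "b < dim_col (B + C)"
    then have a: "a < N" and b: "b < N" using cB cC by auto
    have u0: "U a 0 = - (lam 1 * U a 1 + lam 2 * U a 2) / lam 0"
      using lin[OF a] nz by (simp add: field_simps add_eq_0_iff)
    show "A $$ (a,b) = (B + C) $$ (a,b)"
      using a b cB cC unfolding ent[OF a b] B_def C_def
      using nz by (simp add: u0 divide_simps) (simp add: algebra_simps)
  qed (use car cB cC in auto)
  have rB: "vec_space.rank N B \<le> 1"
    by (rule vec_space.rank_le_1_product_entries[OF cB, of "\<lambda>a. U a 1" "\<lambda>b. V 1 b - lam 1 / lam 0 * V 0 b"])
       (use cB in \<open>auto simp: B_def\<close>)
  have rC: "vec_space.rank N C \<le> 1"
    by (rule vec_space.rank_le_1_product_entries[OF cC, of "\<lambda>a. U a 2" "\<lambda>b. V 2 b - lam 2 / lam 0 * V 0 b"])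
       (use cC in \<open>auto simp: C_def\<close>)
  show ?thesis using vec_space.rank_subadditive[OF cB cC] rB rC AB by simp
qed

lemma rank2':
  fixes A :: "complex mat" and U V :: "nat \<Rightarrow> nat \<Rightarrow> complex" and lam :: "nat \<Rightarrow> complex"
  assumes car: "A \<in> carrier_mat N N"
  and ent: "\<And>a b. a < N \<Longrightarrow> b < N \<Longrightarrow> A $$ (a,b) = U a 0 * V 0 b + U a 1 * V 1 b + U a 2 * V 2 b"
  and lin: "\<And>a. a < N \<Longrightarrow> lam 0 * U a 0 + lam 1 * U a 1 + lam 2 * U a 2 = 0"
  and nz: "lam 0 \<noteq> 0 \<or> lam 1 \<noteq> 0 \<or> lam 2 \<noteq> 0"
  shows "vec_space.rank N A \<le> 2"
  using nz
proof (elim disjE)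
  assume "lam 0 \<noteq> 0" then show ?thesis using rank2[OF car ent lin] by blast
next
  assume l: "lam 1 \<noteq> 0"
  let ?s = "\<lambda>i::nat. if i = 0 then 1 else if i = 1 then 0 else (2::nat)"
  show ?thesis
    by (rule rank2[OF car, of "\<lambda>a i. U a (?s i)" "\<lambda>i b. V (?s i) b" "\<lambda>i. lam (?s i)"])
       (use ent lin l in \<open>auto simp: ac_simps\<close>)
next
  assume l: "lam 2 \<noteq> 0"
  let ?s = "\<lambda>i::nat. if i = 0 then 2 else if i = 1 then 1 else (0::nat)"
  show ?thesis
    by (rule rank2[OF car, of "\<lambda>a i. U a (?s i)" "\<lambda>i b. V (?s i) b" "\<lambda>i. lam (?s i)"])
       (use ent lin l in \<open>auto simp: ac_simps\<close>)
qed



lemma NM_carrier: "NM n d T \<in> carrier_mat (2*n+2*d) (2*n+2*d)"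
  unfolding NM_def by auto

lemma rank_one:
  assumes nd: "2*d+1 \<le> n"
  shows "vec_space.rank (2*n+2*d) (NM n d (\<lambda>i j k. u i * v j * w k)) \<le> 2"
proof (cases "u (sidx d 0) \<noteq> 0 \<or> u (sidx d 1) \<noteq> 0 \<or> u (sidx d 2) \<noteq> 0")
  case True
  show ?thesis
  proof (rule rank2'[OF NM_carrier[of n d "\<lambda>i j k. u i * v j * w k"], of "\<lambda>a s. sg (rp n d a) s * u (iv d (rp n d a) s) * v (rj n d a)"
        "\<lambda>s b. if cq n d b = s then w (ck n d b) else 0" "\<lambda>s. u (sidx d s)"])
    fix a b assume a: "a < 2*n+2*d" and b: "b < 2*n+2*d"
    have "cq n d b < 3" using bounds[OF nd b] by simp
    then have "cq n d b = 0 \<or> cq n d b = 1 \<or> cq n d b = 2" by auto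
    then show "NM n d (\<lambda>i j k. u i * v j * w k) $$ (a, b) =
      (\<lambda>a s. sg (rp n d a) s * u (iv d (rp n d a) s) * v (rj n d a)) a 0 * (\<lambda>s b. if cq n d b = s then w (ck n d b) else 0) 0 b +
      (\<lambda>a s. sg (rp n d a) s * u (iv d (rp n d a) s) * v (rj n d a)) a 1 * (\<lambda>s b. if cq n d b = s then w (ck n d b) else 0) 1 b +
      (\<lambda>a s. sg (rp n d a) s * u (iv d (rp n d a) s) * v (rj n d a)) a 2 * (\<lambda>s b. if cq n d b = s then w (ck n d b) else 0) 2 b"
      using a b unfolding NM_def KT_def by auto
  next
    fix a assume a: "a < 2*n+2*d"
    have "rp n d a < 3" using bounds[OF nd a] by simp
    then have "rp n d a = 0 \<or> rp n d a = 1 \<or> rp n d a = 2" by auto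
    then show "u (sidx d 0) * (sg (rp n d a) 0 * u (iv d (rp n d a) 0) * v (rj n d a)) +
         u (sidx d 1) * (sg (rp n d a) 1 * u (iv d (rp n d a) 1) * v (rj n d a)) +
         u (sidx d 2) * (sg (rp n d a) 2 * u (iv d (rp n d a) 2) * v (rj n d a)) = 0"
      unfolding sg_def iv_def by (auto simp: algebra_simps)
  qed (use True in auto)
next
  case False
  then have z: "u (iv d p q) = 0" for p q unfolding iv_def sidx_def by auto
  show ?thesis
    by (rule order.trans[OF vec_space.rank_le_1_product_entries[OF NM_carrier[of n d "\<lambda>i j k. u i * v j * w k"], of "\<lambda>_. 0" "\<lambda>_. 0"]])
       (auto simp: NM_def KT_def z)
qed

lemma rank_sum:
  assumes nd: "2*d+1 \<le> n"
  shows "vec_space.rank (2*n+2*d) (NM n d (\<lambda>i j k. \<Sum>l<r. u l i * v l j * w l k)) \<le> 2 * r"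
proof (induction r)
  case 0
  have "NM n d (\<lambda>i j k. \<Sum>l<0. u l i * v l j * w l k) = 0\<^sub>m (2*n+2*d) (2*n+2*d)"
    by (rule eq_matI) (auto simp: NM_def KT_def)
  then show ?case using vec_space.rank_0I by simp
next
  case (Suc r)
  have eq: "NM n d (\<lambda>i j k. \<Sum>l<Suc r. u l i * v l j * w l k) =
     NM n d (\<lambda>i j k. \<Sum>l<r. u l i * v l j * w l k) + NM n d (\<lambda>i j k. u r i * v r j * w r k)"
    by (rule eq_matI) (auto simp: NM_def KT_def distrib_left)
  show ?case
    using vec_space.rank_subadditive[OF NM_carrier[of n d "\<lambda>i j k. \<Sum>l<r. u l i * v l j * w l k"]
       NM_carrier[of n d "\<lambda>i j k. u r i * v r j * w r k"]] rank_one[OF nd, of "u r" "v r" "w r"] Suc.IH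
    unfolding eq by simp
qed

lemma NM_cong:
  assumes nd: "2*d+1 \<le> n" and eq: "\<And>i j k. i < n \<Longrightarrow> j < n \<Longrightarrow> k < n \<Longrightarrow> T i j k = T' i j k"
  shows "NM n d T = NM n d T'"
  by (rule eq_matI) (auto simp: NM_def KT_def eq bounds[OF nd] iv_bound[OF nd])

lemma rank_le_NM:
  assumes nd: "2*d+1 \<le> n" and "rank_le n r T"
  shows "vec_space.rank (2*n+2*d) (NM n d T) \<le> 2 * r"
proof -
  obtain u v w where uvw: "\<forall>i<n. \<forall>j<n. \<forall>k<n. T i j k = (\<Sum>l<r. u l i * v l j * w l k)"
    using assms(2) unfolding rank_le_def by blast
  have "NM n d T = NM n d (\<lambda>i j k. \<Sum>l<r. u l i * v l j * w l k)"
    by (rule NM_cong[OF nd]) (use uvw in auto)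
  then show ?thesis using rank_sum[OF nd] by simp
qed

lemma det_tendsto:
  assumes nd: "2*d+1 \<le> n"
  and lim: "\<forall>i<n. \<forall>j<n. \<forall>k<n. (\<lambda>t. S t i j k) \<longlonglongrightarrow> T i j k"
  shows "(\<lambda>t. Determinant.det (NM n d (S t))) \<longlonglongrightarrow> Determinant.det (NM n d T)"
proof -
  let ?N = "2*n+2*d"
  have ent: "(\<lambda>t. NM n d (S t) $$ (a, b)) \<longlonglongrightarrow> NM n d T $$ (a, b)" if "a < ?N" "b < ?N" for a b
    using that lim bounds[OF nd] iv_bound[OF nd]
    by (auto simp: NM_def KT_def intro!: tendsto_mult_left)
  show ?thesis
    unfolding det_def'[OF NM_carrier]
    apply (rule tendsto_sum)
    apply (rule tendsto_mult_left)
    apply (rule tendsto_prod)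
    apply (rule ent)
     apply simp
    using permutes_in_image by fastforce
qed

lemma border_det_zero:
  assumes nd: "2*d+1 \<le> n" and br: "border_rank_le n r T" and r: "2 * r < 2*n+2*d"
  shows "Determinant.det (NM n d T) = 0"
proof -
  obtain S where S: "\<forall>t. rank_le n r (S t)" and lim: "\<forall>i<n. \<forall>j<n. \<forall>k<n. (\<lambda>t. S t i j k) \<longlonglongrightarrow> T i j k"
    using br unfolding border_rank_le_def by blast
  have "Determinant.det (NM n d (S t)) = 0" for t
  proof -
    have "vec_space.rank (2*n+2*d) (NM n d (S t)) \<le> 2*r" using rank_le_NM[OF nd S[rule_format]] .
    then show ?thesis using vec_space.det_rank_iff[OF NM_carrier[of n d "S t"]] r by fastforce
  qed
  then have "(\<lambda>t. Determinant.det (NM n d (S t))) \<longlonglongrightarrow> 0" by simp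
  with det_tendsto[OF nd lim] show ?thesis using LIMSEQ_unique by blast
qed



lemma pf_sum:
  assumes "finite S" "\<And>s. s \<in> S \<Longrightarrow> f s \<in> poly_fun m"
  shows "(\<lambda>x. \<Sum>s\<in>S. f s x) \<in> poly_fun m"
  using assms
proof (induction S rule: finite_induct)
  case empty then show ?case using poly_fun.const[of 0 m] by simp
next
  case (insert s S)
  then show ?case using poly_fun.add[of "f s" m "\<lambda>x. \<Sum>s\<in>S. f s x"] by simp
qed

lemma pf_prod:
  assumes "finite S" "\<And>s. s \<in> S \<Longrightarrow> f s \<in> poly_fun m"
  shows "(\<lambda>x. \<Prod>s\<in>S. f s x) \<in> poly_fun m"
  using assms
proof (induction S rule: finite_induct)
  case empty then show ?case using poly_fun.const[of 1 m] by simp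
next
  case (insert s S)
  then show ?case using poly_fun.mult[of "f s" m "\<lambda>x. \<Prod>s\<in>S. f s x"] by simp
qed

lemma det_poly:
  assumes nd: "2*d+1 \<le> n"
  shows "(\<lambda>h. Determinant.det (NM n d (hankel h))) \<in> poly_fun (3*n-2)"
proof -
  let ?N = "2*n+2*d"
  have ent: "(\<lambda>h. NM n d (hankel h) $$ (a, b)) \<in> poly_fun (3*n-2)" if "a < ?N" "b < ?N" for a b
  proof -
    have eq: "(\<lambda>h. NM n d (hankel h) $$ (a, b)) =
      (\<lambda>h. (\<lambda>_. sg (rp n d a) (cq n d b)) h * (\<lambda>h. h (iv d (rp n d a) (cq n d b) + rj n d a + ck n d b)) h)"
      using that by (auto simp: NM_def KT_def hankel_def)
    have "iv d (rp n d a) (cq n d b) \<le> 2*d" unfolding iv_def sidx_def by auto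
    then have "iv d (rp n d a) (cq n d b) + rj n d a + ck n d b < 3*n-2"
      using bounds[OF nd that(1)] bounds[OF nd that(2)] nd by linarith
    then show ?thesis unfolding eq by (intro poly_fun.mult poly_fun.const poly_fun.var)
  qed
  have "(\<lambda>h. Determinant.det (NM n d (hankel h))) =
    (\<lambda>h. \<Sum>p\<in>{p. p permutes {0..<?N}}. (\<lambda>h. signof p * (\<Prod>i = 0..<?N. NM n d (hankel h) $$ (i, p i))) h)"
    unfolding det_def'[OF NM_carrier] by simp
  also have "\<dots> \<in> poly_fun (3*n-2)"
  proof (rule pf_sum)
    show "finite {p. p permutes {0..<?N}}" by (simp add: finite_permutations)
  next
    fix p assume p: "p \<in> {p. p permutes {0..<?N}}"
    have "(\<lambda>h. \<Prod>i = 0..<?N. NM n d (hankel h) $$ (i, p i)) \<in> poly_fun (3*n-2)"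
      by (rule pf_prod) (use p permutes_in_image ent in fastforce)+
    then show "(\<lambda>h. signof p * (\<Prod>i = 0..<?N. NM n d (hankel h) $$ (i, p i))) \<in> poly_fun (3*n-2)"
      using poly_fun.mult[OF poly_fun.const[of "signof p"]] by blast
  qed
  finally show ?thesis .
qed

lemma rank_le_exists: "rank_le n (n*n) T"
  unfolding rank_le_def
proof (intro exI allI impI)
  fix i j k assume ijk: "i < n" "j < n" "k < n"
  have "(\<Sum>l<n*n. T i (l div n) (l mod n) * (if j = l div n then 1 else 0) * (if k = l mod n then 1 else 0))
      = (\<Sum>l<n*n. if l = j*n+k then T i j k else 0)"
  proof (rule sum.cong[OF refl])
    fix l
    have "(j = l div n \<and> k = l mod n) \<longleftrightarrow> l = j*n+k"
    proof
      assume "j = l div n \<and> k = l mod n"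
      then show "l = j*n+k" using div_mult_mod_eq[of l n] by simp
    next
      assume "l = j*n+k"
      then show "j = l div n \<and> k = l mod n" using ijk by simp
    qed
    then show "T i (l div n) (l mod n) * (if j = l div n then 1 else 0) * (if k = l mod n then 1 else 0)
      = (if l = j*n+k then T i j k else 0)" by auto
  qed
  also have "\<dots> = T i j k"
  proof -
    have "j*n+k < (j+1)*n" using ijk by simp
    also have "(j+1)*n \<le> n*n" using ijk by (intro mult_le_mono1) simp
    finally have "j*n+k < n*n" .
    then show ?thesis by simp
  qed
  finally show "T i j k = (\<Sum>l<n*n. (\<lambda>l i. T i (l div n) (l mod n)) l i *
     (\<lambda>l j. if j = l div n then 1 else 0) l j * (\<lambda>l k. if k = l mod n then 1 else 0) l k)" by simp
qed



theorem theorem5p2: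
  fixes n :: nat
  assumes "n \<ge> 1"
  shows "\<exists>Z. zariski_closed (3 * n - 2) Z \<and> Z \<noteq> UNIV \<and>
           (\<forall>h. h \<notin> Z \<longrightarrow> border_rank n (hankel h) \<ge> (3 * n - 1) div 2)"
proof -
  define d where "d = (n-1) div 2"
  have nd: "2*d+1 \<le> n" using assms unfolding d_def by linarith
  have nd2: "n \<le> 2*d + 2" unfolding d_def by linarith
  define Z where "Z = {h. Determinant.det (NM n d (hankel h)) = 0}"
  have zc: "zariski_closed (3*n-2) Z"
    unfolding zariski_closed_def Z_def
    by (rule exI[of _ "{\<lambda>h. Determinant.det (NM n d (hankel h))}"]) (use det_poly[OF nd] in auto)
  have nu: "Z \<noteq> UNIV" using witness_det[OF nd] unfolding Z_def by auto
  have bd: "border_rank n (hankel h) \<ge> (3 * n - 1) div 2" if h: "h \<notin> Z" for h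
  proof -
    let ?P = "\<lambda>r. border_rank_le n r (hankel h)"
    have ex: "?P (n*n)" unfolding border_rank_le_def
      by (rule exI[of _ "\<lambda>_. hankel h"]) (simp add: rank_le_exists)
    have PL: "?P (LEAST r. ?P r)" by (rule LeastI[of ?P, OF ex])
    show ?thesis unfolding border_rank_def
    proof (rule ccontr)
      assume "\<not> (3 * n - 1) div 2 \<le> (LEAST r. ?P r)"
      then have "(LEAST r. ?P r) < (3 * n - 1) div 2" by simp
      then have "2 * (LEAST r. ?P r) < 2*n+2*d" using nd2 by linarith
      from border_det_zero[OF nd PL this] h show False unfolding Z_def by simp
    qed
  qed
  show ?thesis using zc nu bd by blast
qed


end
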